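(* Let $n\ge2$ and let $x=(x(1),\ldots,x(n))$ be a sequence of integers, and $i\in[n]$. (a) If $x'$ is obtained from $x$ by deleting the entry $x(i)$, then $\boldsymbol{b}(x')$ is obtained from $\boldsymbol{b}(x)$ by deleting the entry $\boldsymbol{b}(x)(i)$ or the entry $\boldsymbol{b}(x)(i+1)$ (the latter only when $i<n$). (b) If $x''$ is obtained from $x$ by replacing the entry $x(i)$ with another value, then one of the following holds: (1) $(\boldsymbol{b}(x)(i),\boldsymbol{b}(x)(i+1))=(1,0)$ and $(\boldsymbol{b}(x'')(i),\boldsymbol{b}(x'')(i+1))=(0,1)$, or vice versa, with all other entries equal; (2) $\boldsymbol{b}(x'')$ differs from $\boldsymbol{b}(x)$ in exactly one of the entries $i$, $i+1$; (3) $\boldsymbol{b}(x'')=\boldsymbol{b}(x)$.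
   Context: For an integer sequence $x$ of length $N$, $\boldsymbol{b}(x)\in\{0,1\}^N$ is defined by $\boldsymbol{b}(x)(1)=1$ and, for $2\le i\le N$, $\boldsymbol{b}(x)(i)=1$ if $x(i)>x(i-1)$ and $\boldsymbol{b}(x)(i)=0$ otherwise. Entries with index $N+1$ are disregarded. *)

theory Defs
  imports Main
begin

(* Sequences x = (x(1),...,x(N)) are int lists; the paper's 1-based entry x(k) is x ! (k-1).
   bvec x is the 0/1 list b(x): entry k (1-based) is 1 if k = 1 or x(k) > x(k-1), else 0. *)
definition bvec :: "int list \<Rightarrow> nat list" where
  "bvec x = map (\<lambda>k. if k = 0 then 1 else if x ! k > x ! (k - 1) then 1 else 0) [0..<length x]"

definition ent :: "'a list \<Rightarrow> nat \<Rightarrow> 'a" where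
  "ent l k = l ! (k - 1)"

definition del_ent :: "'a list \<Rightarrow> nat \<Rightarrow> 'a list" where
  "del_ent l k = take (k - 1) l @ drop k l"

end

theory Submission
  imports Defs
begin

lemma len_bvec[simp]: "length (bvec x) = length x"
  by (simp add: bvec_def)

lemma nth_bvec: "k < length x \<Longrightarrow> bvec x ! k = (if k = 0 then 1 else if x ! k > x ! (k - 1) then 1 else 0)"
  by (simp add: bvec_def)

lemma len_del: "1 \<le> i \<Longrightarrow> i \<le> length l \<Longrightarrow> length (del_ent l i) = length l - 1"
  by (simp add: del_ent_def)

lemma nth_del: "1 \<le> i \<Longrightarrow> i \<le> length l \<Longrightarrow> k < length l - 1 \<Longrightarrow>
   del_ent l i ! k = (if k < i - 1 then l ! k else l ! (k + 1))"
  by (auto simp add: del_ent_def nth_append min_def)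

lemma partA:
  assumes "n \<ge> 2" and "length x = n" and "1 \<le> i" and "i \<le> n"
  shows "bvec (del_ent x i) = del_ent (bvec x) i \<or>
          (i < n \<and> bvec (del_ent x i) = del_ent (bvec x) (i + 1))"
proof -
  have L: "length (del_ent x i) = n - 1" using assms len_del by metis
  have Lb: "length (del_ent (bvec x) i) = n - 1" using assms len_del[of i "bvec x"] by simp
  have Lb2: "i < n \<Longrightarrow> length (del_ent (bvec x) (i+1)) = n - 1" using assms len_del[of "i+1" "bvec x"] by simp
  have E: "\<And>k. k < n - 1 \<Longrightarrow> bvec (del_ent x i) ! k =
      (if k = 0 then 1 else if del_ent x i ! k > del_ent x i ! (k - 1) then 1 else 0)"
    using L nth_bvec by simp
  have Dx: "\<And>k. k < n - 1 \<Longrightarrow> del_ent x i ! k = (if k < i - 1 then x ! k else x ! (k + 1))"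
    using assms nth_del by metis
  have Db: "\<And>k. k < n - 1 \<Longrightarrow> del_ent (bvec x) i ! k = (if k < i - 1 then bvec x ! k else bvec x ! (k + 1))"
    using assms nth_del[of i "bvec x"] by simp
  have Db2: "\<And>k. i < n \<Longrightarrow> k < n - 1 \<Longrightarrow> del_ent (bvec x) (i+1) ! k = (if k < i then bvec x ! k else bvec x ! (k + 1))"
    using assms nth_del[of "i+1" "bvec x"] by simp
  have B: "\<And>k. k < n \<Longrightarrow> bvec x ! k = (if k = 0 then 1 else if x ! k > x ! (k - 1) then 1 else 0)"
    using assms nth_bvec by simp
  have offi: "\<And>k. k < n - 1 \<Longrightarrow> k \<noteq> i - 1 \<Longrightarrow> bvec (del_ent x i) ! k = del_ent (bvec x) i ! k"
    using E Dx Db B by auto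
  have offi2: "\<And>k. i < n \<Longrightarrow> k < n - 1 \<Longrightarrow> k \<noteq> i - 1 \<Longrightarrow> bvec (del_ent x i) ! k = del_ent (bvec x) (i+1) ! k"
    using E Dx Db2 B by auto
  show ?thesis
  proof (cases "i = n")
    case True
    have "bvec (del_ent x i) = del_ent (bvec x) i"
      by (rule nth_equalityI) (use L Lb offi True in auto)
    then show ?thesis by simp
  next
    case False
    hence iln: "i < n" using assms by simp
    have "bvec (del_ent x i) ! (i-1) = del_ent (bvec x) i ! (i-1) \<or>
          bvec (del_ent x i) ! (i-1) = del_ent (bvec x) (i+1) ! (i-1)"
      using E[of "i-1"] Dx Db[of "i-1"] Db2[of "i-1"] B[of "i-1"] B[of i] iln assms
      by (cases "i = 1") (auto simp: not_less)
    then show ?thesis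
    proof
      assume h: "bvec (del_ent x i) ! (i-1) = del_ent (bvec x) i ! (i-1)"
      have "bvec (del_ent x i) = del_ent (bvec x) i"
      proof (rule nth_equalityI)
        show "length (bvec (del_ent x i)) = length (del_ent (bvec x) i)" using L Lb by simp
        fix k assume "k < length (bvec (del_ent x i))"
        then show "bvec (del_ent x i) ! k = del_ent (bvec x) i ! k" using L h offi
          by (cases "k = i - 1") auto
      qed
      then show ?thesis by simp
    next
      assume h: "bvec (del_ent x i) ! (i-1) = del_ent (bvec x) (i+1) ! (i-1)"
      have "bvec (del_ent x i) = del_ent (bvec x) (i+1)"
      proof (rule nth_equalityI)
        show "length (bvec (del_ent x i)) = length (del_ent (bvec x) (i+1))" using L Lb2 iln by simp
        fix k assume "k < length (bvec (del_ent x i))"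
        then show "bvec (del_ent x i) ! k = del_ent (bvec x) (i+1) ! k" using L h offi2 iln
          by (cases "k = i - 1") auto
      qed
      then show ?thesis using iln by simp
    qed
  qed
qed

lemma partB:
  assumes "n \<ge> 2" and "length x = n" and "1 \<le> i" and "i \<le> n" and "v \<noteq> ent x i"
  shows "(let y = x[i - 1 := v] in
           (i < n \<and>
              ((ent (bvec x) i = 1 \<and> ent (bvec x) (i + 1) = 0 \<and>
                ent (bvec y) i = 0 \<and> ent (bvec y) (i + 1) = 1) \<or>
               (ent (bvec x) i = 0 \<and> ent (bvec x) (i + 1) = 1 \<and>
                ent (bvec y) i = 1 \<and> ent (bvec y) (i + 1) = 0)) \<and>
              (\<forall>k\<in>{1..n} - {i, i + 1}. ent (bvec y) k = ent (bvec x) k))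
         \<or> (\<exists>j\<in>{i, i + 1}. j \<le> n \<and>
              (\<forall>k\<in>{1..n}. ent (bvec y) k \<noteq> ent (bvec x) k \<longleftrightarrow> k = j))
         \<or> bvec y = bvec x)"
proof -
  define y where "y = x[i - 1 := v]"
  have ly: "length y = n" using assms y_def by simp
  have By: "\<And>k. k < n \<Longrightarrow> bvec y ! k = (if k = 0 then 1 else if y ! k > y ! (k - 1) then 1 else 0)"
    using ly nth_bvec by metis
  have Bx: "\<And>k. k < n \<Longrightarrow> bvec x ! k = (if k = 0 then 1 else if x ! k > x ! (k - 1) then 1 else 0)"
    using assms nth_bvec by metis
  have Y: "\<And>k. k < n \<Longrightarrow> y ! k = (if k = i - 1 then v else x ! k)"
    using assms y_def by simp
  have F1: "\<And>k. k \<in> {1..n} \<Longrightarrow> k \<noteq> i \<Longrightarrow> k \<noteq> i + 1 \<Longrightarrow> ent (bvec y) k = ent (bvec x) k"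
  proof -
    fix k assume k: "k \<in> {1..n}" "k \<noteq> i" "k \<noteq> i + 1"
    show "ent (bvec y) k = ent (bvec x) k"
    proof -
      obtain m where m: "k = Suc m" using k by (cases k) auto
      have "m < n" using k m by simp
      moreover have "y ! m = x ! m" using Y[of m] k m \<open>m < n\<close> by auto
      moreover have "m \<noteq> 0 \<Longrightarrow> y ! (m - 1) = x ! (m - 1)" using Y[of "m-1"] k m \<open>m < n\<close> assms(3) by auto
      ultimately show ?thesis unfolding ent_def using By[of m] Bx[of m] m by auto
    qed
  qed
  have F2: "i = 1 \<Longrightarrow> ent (bvec y) i = ent (bvec x) i"
    unfolding ent_def using By[of 0] Bx[of 0] assms by simp
  have F3: "1 < i \<Longrightarrow> i < n \<Longrightarrow> ent (bvec y) i \<noteq> ent (bvec x) i \<Longrightarrow>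
       ent (bvec y) (i+1) \<noteq> ent (bvec x) (i+1) \<Longrightarrow>
      ((ent (bvec x) i = 1 \<and> ent (bvec x) (i + 1) = 0 \<and>
                ent (bvec y) i = 0 \<and> ent (bvec y) (i + 1) = 1) \<or>
               (ent (bvec x) i = 0 \<and> ent (bvec x) (i + 1) = 1 \<and>
                ent (bvec y) i = 1 \<and> ent (bvec y) (i + 1) = 0))"
  proof -
    assume h: "1 < i" "i < n" "ent (bvec y) i \<noteq> ent (bvec x) i" "ent (bvec y) (i+1) \<noteq> ent (bvec x) (i+1)"
    define m where "m = i - 2"
    have m: "i = Suc (Suc m)" using h(1) unfolding m_def by simp
    have mn: "Suc m < n" "m < n" "Suc (Suc m) < n" using h(2) m by simp_all
    have y1: "y ! Suc m = v" "y ! m = x ! m" "y ! Suc (Suc m) = x ! Suc (Suc m)"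
      using Y[OF mn(1)] Y[OF mn(2)] Y[OF mn(3)] m by simp_all
    have a1: "bvec x ! Suc m = (if x ! m < x ! Suc m then 1 else 0)" using Bx[OF mn(1)] by simp
    have a2: "bvec x ! Suc (Suc m) = (if x ! Suc m < x ! Suc (Suc m) then 1 else 0)" using Bx[OF mn(3)] by simp
    have b1: "bvec y ! Suc m = (if x ! m < v then 1 else 0)" using By[OF mn(1)] y1 by simp
    have b2: "bvec y ! Suc (Suc m) = (if v < x ! Suc (Suc m) then 1 else 0)" using By[OF mn(3)] y1 by simp
    have e: "ent (bvec x) i = bvec x ! Suc m" "ent (bvec x) (i+1) = bvec x ! Suc (Suc m)"
      "ent (bvec y) i = bvec y ! Suc m" "ent (bvec y) (i+1) = bvec y ! Suc (Suc m)"
      unfolding ent_def m by simp_all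
    show ?thesis using h(3,4) unfolding e a1 a2 b1 b2
      by (cases "x ! m < x ! Suc m"; cases "x ! Suc m < x ! Suc (Suc m)"; cases "x ! m < v"; cases "v < x ! Suc (Suc m)") auto
  qed
  have Eq: "(\<forall>k\<in>{1..n}. ent (bvec y) k = ent (bvec x) k) \<Longrightarrow> bvec y = bvec x"
  proof (rule nth_equalityI)
    show "length (bvec y) = length (bvec x)" using ly assms by simp
    fix k assume h: "\<forall>k\<in>{1..n}. ent (bvec y) k = ent (bvec x) k" and "k < length (bvec y)"
    then show "bvec y ! k = bvec x ! k" using h[rule_format, of "k+1"] ly by (simp add: ent_def)
  qed
  have "(i < n \<and>
              ((ent (bvec x) i = 1 \<and> ent (bvec x) (i + 1) = 0 \<and>
                ent (bvec y) i = 0 \<and> ent (bvec y) (i + 1) = 1) \<or>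
               (ent (bvec x) i = 0 \<and> ent (bvec x) (i + 1) = 1 \<and>
                ent (bvec y) i = 1 \<and> ent (bvec y) (i + 1) = 0)) \<and>
              (\<forall>k\<in>{1..n} - {i, i + 1}. ent (bvec y) k = ent (bvec x) k))
         \<or> (\<exists>j\<in>{i, i + 1}. j \<le> n \<and>
              (\<forall>k\<in>{1..n}. ent (bvec y) k \<noteq> ent (bvec x) k \<longleftrightarrow> k = j))
         \<or> bvec y = bvec x"
  proof (cases "ent (bvec y) i = ent (bvec x) i")
    case ci: True
    show ?thesis
    proof (cases "i < n \<and> ent (bvec y) (i+1) \<noteq> ent (bvec x) (i+1)")
      case True
      have "\<forall>k\<in>{1..n}. ent (bvec y) k \<noteq> ent (bvec x) k \<longleftrightarrow> k = i + 1"
      proof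
        fix k assume k: "k \<in> {1..n}"
        show "ent (bvec y) k \<noteq> ent (bvec x) k \<longleftrightarrow> k = i + 1"
        proof (cases "k = i")
          case True then show ?thesis using ci by simp
        next
          case False then show ?thesis using F1[OF k] True by (cases "k = i + 1") simp_all
        qed
      qed
      then have "\<exists>j\<in>{i, i + 1}. j \<le> n \<and>
              (\<forall>k\<in>{1..n}. ent (bvec y) k \<noteq> ent (bvec x) k \<longleftrightarrow> k = j)"
        using True by (intro bexI[of _ "i+1"]) simp_all
      then show ?thesis by (intro disjI2 disjI1)
    next
      case False
      have "\<forall>k\<in>{1..n}. ent (bvec y) k = ent (bvec x) k"
      proof
        fix k assume k: "k \<in> {1..n}"
        show "ent (bvec y) k = ent (bvec x) k"
        proof (cases "k = i")
          case True then show ?thesis using ci by simp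
        next
          case ki: False
          show ?thesis
          proof (cases "k = i + 1")
            case True then show ?thesis using False k by auto
          next
            case False then show ?thesis using F1[OF k ki] by simp
          qed
        qed
      qed
      then show ?thesis using Eq by (intro disjI2 disjI2) 
    qed
  next
    case ci: False
    have i1: "1 < i" using F2 ci assms(3) by (cases "i = 1") simp_all
    show ?thesis
    proof (cases "i < n \<and> ent (bvec y) (i+1) \<noteq> ent (bvec x) (i+1)")
      case True
      have "\<forall>k\<in>{1..n} - {i, i + 1}. ent (bvec y) k = ent (bvec x) k" using F1 by blast
      then show ?thesis using F3[OF i1] True ci by (intro disjI1) simp
    next
      case False
      have "\<forall>k\<in>{1..n}. ent (bvec y) k \<noteq> ent (bvec x) k \<longleftrightarrow> k = i"
      proof
        fix k assume k: "k \<in> {1..n}"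
        show "ent (bvec y) k \<noteq> ent (bvec x) k \<longleftrightarrow> k = i"
        proof (cases "k = i")
          case True then show ?thesis using ci by simp
        next
          case ki: False
          show ?thesis
          proof (cases "k = i + 1")
            case True then show ?thesis using False k ki by auto
          next
            case False then show ?thesis using F1[OF k ki] ki by simp
          qed
        qed
      qed
      then have "\<exists>j\<in>{i, i + 1}. j \<le> n \<and>
              (\<forall>k\<in>{1..n}. ent (bvec y) k \<noteq> ent (bvec x) k \<longleftrightarrow> k = j)"
        using assms(4) by (intro bexI[of _ i]) simp_all
      then show ?thesis by (intro disjI2 disjI1)
    qed
  qed
  then show ?thesis unfolding y_def Let_def .
qed

theorem proposition1:
  fixes x :: "int list" and n i :: nat and v :: int
  assumes "n \<ge> 2" and "length x = n" and "1 \<le> i" and "i \<le> n"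
  shows "(bvec (del_ent x i) = del_ent (bvec x) i \<or>
          (i < n \<and> bvec (del_ent x i) = del_ent (bvec x) (i + 1)))
     \<and> (v \<noteq> ent x i \<longrightarrow>
         (let y = x[i - 1 := v] in
           (i < n \<and>
              ((ent (bvec x) i = 1 \<and> ent (bvec x) (i + 1) = 0 \<and>
                ent (bvec y) i = 0 \<and> ent (bvec y) (i + 1) = 1) \<or>
               (ent (bvec x) i = 0 \<and> ent (bvec x) (i + 1) = 1 \<and>
                ent (bvec y) i = 1 \<and> ent (bvec y) (i + 1) = 0)) \<and>
              (\<forall>k\<in>{1..n} - {i, i + 1}. ent (bvec y) k = ent (bvec x) k))
         \<or> (\<exists>j\<in>{i, i + 1}. j \<le> n \<and>
              (\<forall>k\<in>{1..n}. ent (bvec y) k \<noteq> ent (bvec x) k \<longleftrightarrow> k = j))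
         \<or> bvec y = bvec x))"
  using partA[OF assms] partB[OF assms] by blast

end
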